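(* Let $n,m$ be even integers with $0\le m\le n$ and let $h_l$ be the orthonormal Hermite polynomials for the weight $e^{-x^2}$ on $\mathbb{R}$. For $P=\sum_{l=0}^nc_lh_l$ ($c_l\in\mathbb{C}$): (i) $\operatorname{var}_S(P)=\mathbf{c}_e^H\mathbf{J}(-\tfrac12)_{n/2}\mathbf{c}_e+\mathbf{c}_o^H\mathbf{J}(\tfrac12)_{n/2-1}\mathbf{c}_o$, where $\mathbf{c}_e=(c_0,c_2,\dots,c_n)^T$, $\mathbf{c}_o=(c_1,c_3,\dots,c_{n-1})^T$; (ii) if moreover $c_0=\dots=c_{m-1}=0$, then $\operatorname{var}_S(P)=\tilde{\mathbf{c}}_e^H\mathbf{J}(-\tfrac12)^{m/2}_{n/2}\tilde{\mathbf{c}}_e+\tilde{\mathbf{c}}_o^H\mathbf{J}(\tfrac12)^{m/2}_{n/2-1}\tilde{\mathbf{c}}_o$, where $\tilde{\mathbf{c}}_e=(c_m,c_{m+2},\dots,c_n)^T$, $\tilde{\mathbf{c}}_o=(c_{m+1},c_{m+3},\dots,c_{n-1})^T$.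
   Context: $\operatorname{var}_S(f)=\int_{\mathbb{R}}x^2|f(x)|^2e^{-x^2}dx$. For $\alpha>-1$ and integers $0\le M\le N$, $\mathbf{J}(\alpha)^M_N$ denotes the real symmetric tridiagonal $(N-M+1)\times(N-M+1)$ matrix with diagonal entries $a_M,\dots,a_N$ and off-diagonal entries $b_{M+1},\dots,b_N$, where $a_l=2l+\alpha+1$ and $b_l=\sqrt{l(l+\alpha)}$ are the recurrence coefficients of the orthonormal Laguerre polynomials for the weight $x^\alpha e^{-x}$ on $[0,\infty)$ (this is the Jacobi matrix of the associated Laguerre polynomials $p^{(\alpha)}_l(x,M)$); $\mathbf{J}(\alpha)_N=\mathbf{J}(\alpha)^0_N$. When the odd coefficient vector is empty (e.g. $n=m$), the corresponding term is zero. *)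

theory Defs
  imports "HOL-Analysis.Analysis"
begin

fun hermite_H :: "nat \<Rightarrow> real \<Rightarrow> real" where
  "hermite_H 0 x = 1"
| "hermite_H (Suc 0) x = 2 * x"
| "hermite_H (Suc (Suc l)) x = 2 * x * hermite_H (Suc l) x - 2 * real (Suc l) * hermite_H l x"

definition hermite_on :: "nat \<Rightarrow> real \<Rightarrow> real" where
  "hermite_on l x = hermite_H l x / sqrt (2 ^ l * fact l * sqrt pi)"

definition varS :: "(real \<Rightarrow> complex) \<Rightarrow> real" where
  "varS f = (\<integral>x. x\<^sup>2 * (cmod (f x))\<^sup>2 * exp (- x\<^sup>2) \<partial>lborel)"

definition lag_a :: "real \<Rightarrow> int \<Rightarrow> real" where
  "lag_a \<alpha> l = 2 * of_int l + \<alpha> + 1"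

definition lag_b :: "real \<Rightarrow> int \<Rightarrow> real" where
  "lag_b \<alpha> l = sqrt (of_int l * (of_int l + \<alpha>))"

text \<open>Entries of the Jacobi matrix J(alpha)^M_N, rows/columns indexed by M..N:
  diagonal a_i, off-diagonal entries (i,i+1),(i+1,i) equal b_{i+1}.\<close>
definition jacobi_entry :: "real \<Rightarrow> int \<Rightarrow> int \<Rightarrow> real" where
  "jacobi_entry \<alpha> i j =
     (if i = j then lag_a \<alpha> i
      else if j = i + 1 then lag_b \<alpha> j
      else if i = j + 1 then lag_b \<alpha> i
      else 0)"

text \<open>Hermitian form v^H J(alpha)^M_N v for a vector v indexed by M..N
  (integer indices, so an empty index range M > N gives 0).\<close>
definition jacobi_form :: "real \<Rightarrow> int \<Rightarrow> int \<Rightarrow> (int \<Rightarrow> complex) \<Rightarrow> complex" where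
  "jacobi_form \<alpha> M N v =
     (\<Sum>i\<in>{M..N}. \<Sum>j\<in>{M..N}. cnj (v i) * complex_of_real (jacobi_entry \<alpha> i j) * v j)"

end

theory Submission
  imports Defs "HOL-Probability.Probability" "HOL-Computational_Algebra.Polynomial"
begin


definition mom :: "nat \<Rightarrow> real" where
  "mom j = (if even j then sqrt pi * fact j / (2 ^ j * fact (j div 2)) else 0)"

lemma mom_int: "has_bochner_integral lborel (\<lambda>x::real. exp (- x\<^sup>2) * x ^ j) (mom j)"
proof (cases "even j")
  case True
  then obtain k where j: "j = 2 * k" by blast
  have "has_bochner_integral lborel (\<lambda>x::real. exp (-x\<^sup>2)*x^(2 * k))
      (2 *\<^sub>R ((sqrt pi / 2) * (fact (2 * k) / (2 ^ (2 * k) * fact k))))"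
    by (rule has_bochner_integral_even_function[OF gaussian_moment_even_pos[where k=k]]) simp
  then show ?thesis using j by (simp add: mom_def)
next
  case False
  then obtain k where j: "j = 2 * k + 1" using oddE by blast
  have "has_bochner_integral lborel (\<lambda>x::real. exp (-x\<^sup>2)*x^(2 * k + 1)) 0"
    by (rule has_bochner_integral_odd_function[OF gaussian_moment_odd_pos[where k=k]]) simp
  then show ?thesis using j by (simp add: mom_def)
qed

lemma mom_rec: "2 * mom (Suc i) = real i * mom (i - 1)"
proof (cases "even i")
  case True
  then show ?thesis by (simp add: mom_def)
next
  case False
  then obtain k where i: "i = 2 * k + 1" using oddE by blast
  have e: "Suc i = 2 * k + 2" "i - 1 = 2 * k" using i by auto
  have f1: "fact (2 * k + 2) = (2 * real k + 2) * (2 * real k + 1) * (fact (2 * k) :: real)"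
    by (simp add: fact_Suc algebra_simps)
  have f2: "fact (Suc k) = (real k + 1) * (fact k :: real)" by (simp add: fact_Suc algebra_simps)
  have d: "(2 * k + 2) div 2 = Suc k" by simp
  have "mom (Suc i) = sqrt pi * fact (2 * k + 2) / (2 ^ (2 * k + 2) * fact (Suc k))"
    unfolding e mom_def d by simp
  also have "\<dots> = sqrt pi * ((2 * real k + 2) * (2 * real k + 1) * fact (2 * k)) / (2 ^ (2 * k) * 4 * ((real k + 1) * fact k))"
    unfolding f1 f2 by (simp add: power_add)
  also have "\<dots> = (2 * real k + 1) / 2 * (sqrt pi * fact (2 * k) / (2 ^ (2 * k) * fact k))"
  proof -
    have g: "A * ((2 * t + 2) * (2 * t + 1) * F) / (P * 4 * ((t + 1) * G)) = (2 * t + 1) / 2 * (A * F / (P * G))"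
      if "P > 0" "G > 0" "t \<ge> 0" for A F P G t :: real
    proof -
      have "A * ((2 * t + 2) * (2 * t + 1) * F) / (P * 4 * ((t + 1) * G)) = ((t+1) * (2*A*(2*t+1)*F)) / ((t+1) * (4*P*G))"
        by (simp add: algebra_simps)
      also have "\<dots> = (2*A*(2*t+1)*F) / (4*P*G)" using that by (intro mult_divide_mult_cancel_left) auto
      also have "\<dots> = (2 * t + 1) / 2 * (A * F / (P * G))" using that by (simp add: field_simps)
      finally show ?thesis .
    qed
    show ?thesis by (rule g) auto
  qed
  finally have "mom (Suc i) = (2 * real k + 1) / 2 * mom (i - 1)"
    unfolding e by (simp add: mom_def)
  then show ?thesis using i by (simp add: algebra_simps)
qed

definition L :: "real poly \<Rightarrow> real" where
  "L p = (\<Sum>i\<le>degree p. coeff p i * mom i)"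

lemma L_bound: assumes "degree p < K" shows "L p = (\<Sum>i<K. coeff p i * mom i)"
  unfolding L_def
  by (rule sum.mono_neutral_left) (use assms in \<open>auto simp: coeff_eq_0\<close>)

lemma L_int: "has_bochner_integral lborel (\<lambda>x. poly p x * exp (- x\<^sup>2)) (L p)"
proof -
  have "has_bochner_integral lborel (\<lambda>x. \<Sum>i\<le>degree p. coeff p i * (exp (- x\<^sup>2) * x ^ i)) (L p)"
    unfolding L_def
    by (intro has_bochner_integral_sum has_bochner_integral_mult_right mom_int)
  then show ?thesis
    by (rule has_bochner_integral_cong[THEN iffD1, rotated 3])
       (auto simp: poly_altdef sum_distrib_left algebra_simps)
qed

lemma L_add: "L (p + q) = L p + L q"
proof -
  define K where "K = Suc (max (degree p) (degree q))"
  have "degree (p + q) < K" unfolding K_def using degree_add_le_max[of p q] by linarith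
  moreover have "degree p < K" "degree q < K" unfolding K_def by auto
  ultimately show ?thesis by (simp add: L_bound sum.distrib algebra_simps)
qed

lemma L_smult: "L (smult a p) = a * L p"
proof -
  have "degree (smult a p) < Suc (degree p)" using degree_smult_le[of a p] by linarith
  then show ?thesis using L_bound[where p=p and K="Suc (degree p)"]
    by (simp add: L_bound sum_distrib_left algebra_simps)
qed

lemma L_uminus: "L (- p) = - L p"
  using L_smult[of "-1" p] by simp

lemma L_diff: "L (p - q) = L p - L q"
  using L_add[of p "-q"] L_uminus[of q] by simp

lemma L_zero[simp]: "L 0 = 0" by (simp add: L_def mom_def)

lemma L_ibp: "L ([:0,2:] * p) = L (pderiv p)"
proof -
  define d where "d = degree p"
  have e1: "[:0,2:] * p = pCons 0 (smult 2 p)" by (simp add: mult_pCons_left)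
  have "degree ([:0,2:] * p) < Suc (Suc d)"
    unfolding e1 d_def using degree_smult_le[of 2 p] by (simp add: degree_pCons_eq_if)
  then have "L ([:0,2:] * p) = (\<Sum>i<Suc (Suc d). coeff ([:0,2:] * p) i * mom i)" by (rule L_bound)
  also have "\<dots> = (\<Sum>i<Suc d. 2 * coeff p i * mom (Suc i))"
    unfolding e1 by (subst sum.lessThan_Suc_shift) simp
  also have "\<dots> = (\<Sum>i<Suc d. coeff p i * (real i * mom (i - 1)))"
    by (intro sum.cong refl) (metis mom_rec mult.assoc mult.left_commute)
  also have "\<dots> = (\<Sum>i<d. coeff p (Suc i) * (real (Suc i) * mom i))"
    by (subst sum.lessThan_Suc_shift) simp
  also have "\<dots> = (\<Sum>i<Suc d. coeff (pderiv p) i * mom i)"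
    by (simp add: coeff_pderiv d_def coeff_eq_0 algebra_simps)
  also have "\<dots> = L (pderiv p)"
    by (rule L_bound[symmetric]) (simp add: degree_pderiv d_def)
  finally show ?thesis .
qed



fun Hp :: "nat \<Rightarrow> real poly" where
  "Hp 0 = 1"
| "Hp (Suc 0) = [:0,2:]"
| "Hp (Suc (Suc l)) = [:0,2:] * Hp (Suc l) - smult (2 * real (Suc l)) (Hp l)"

lemma poly_Hp: "poly (Hp l) x = hermite_H l x"
  by (induction l rule: Hp.induct) auto

lemma degree_Hp: "degree (Hp l) \<le> l"
proof (induction l rule: Hp.induct)
  case (3 l)
  have a: "degree ([:0,2:] * Hp (Suc l)) \<le> Suc (Suc l)"
    using degree_mult_le[of "[:0,2::real:]" "Hp (Suc l)"] 3(1) by simp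
  have b: "degree (smult (2 * real (Suc l)) (Hp l)) \<le> Suc (Suc l)"
    using degree_smult_le[of "2 * real (Suc l)" "Hp l"] 3(2) by simp
  show ?case using degree_diff_le[OF a b] by simp
qed auto

lemma pderiv_X2: "pderiv [:0,2::real:] = [:2:]"
  by (simp add: pderiv_pCons)

lemma pderiv_X2mult: "pderiv ([:0,2::real:] * p) = smult 2 p + [:0,2:] * pderiv p"
  by (rule poly_eqI) (simp add: coeff_pderiv coeff_pCons algebra_simps split: nat.split)

lemma pderiv_Hp_aux:
  "pderiv (Hp (Suc k)) = smult (2 * real (Suc k)) (Hp k) \<and>
   pderiv (Hp (Suc (Suc k))) = smult (2 * real (Suc (Suc k))) (Hp (Suc k))"
proof (induction k)
  case 0
  show ?case
    by (simp add: pderiv_diff pderiv_mult pderiv_X2 pderiv_smult pderiv_pCons)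
next
  case (Suc k)
  have "pderiv (Hp (Suc (Suc (Suc k)))) =
     pderiv ([:0,2:] * Hp (Suc (Suc k))) - smult (2 * real (Suc (Suc k))) (pderiv (Hp (Suc k)))"
    by (simp only: Hp.simps pderiv_diff pderiv_smult)
  also have "\<dots> = smult 2 (Hp (Suc (Suc k))) + smult (2 * real (Suc (Suc k))) ([:0,2:] * Hp (Suc k) - smult (2 * real (Suc k)) (Hp k))"
    using Suc by (simp only: pderiv_X2mult) (simp add: smult_diff_right del: mult_pCons_left)
  also have "\<dots> = smult 2 (Hp (Suc (Suc k))) + smult (2 * real (Suc (Suc k))) (Hp (Suc (Suc k)))"
    by (simp only: Hp.simps)
  also have "\<dots> = smult (2 * real (Suc (Suc (Suc k)))) (Hp (Suc (Suc k)))"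
    by (simp add: smult_add_left[symmetric] algebra_simps del: Hp.simps)
  finally show ?case using Suc by simp
qed

lemma pderiv_Hp: "pderiv (Hp (Suc k)) = smult (2 * real (Suc k)) (Hp k)"
  using pderiv_Hp_aux by blast

lemma Hp_rec2: "Hp (Suc k) = [:0,2:] * Hp k - pderiv (Hp k)"
  by (cases k) (simp_all add: pderiv_Hp pderiv_pCons)

lemma L_Hp_step: "L (Hp (Suc k) * q) = L (Hp k * pderiv q)"
proof -
  have "Hp (Suc k) * q = [:0,2:] * (Hp k * q) - pderiv (Hp k) * q"
    by (simp add: Hp_rec2 algebra_simps)
  then have "L (Hp (Suc k) * q) = L ([:0,2:] * (Hp k * q)) - L (pderiv (Hp k) * q)"
    by (simp only: L_diff)
  also have "\<dots> = L (pderiv (Hp k * q)) - L (pderiv (Hp k) * q)"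
    by (simp only: L_ibp)
  also have "\<dots> = L (Hp k * pderiv q)"
    by (simp add: pderiv_mult L_add mult.commute)
  finally show ?thesis .
qed

lemma L_Hp_ortho: "degree q < k \<Longrightarrow> L (Hp k * q) = 0"
proof (induction k arbitrary: q)
  case 0 then show ?case by simp
next
  case (Suc k)
  show ?case
  proof (cases "degree q = 0")
    case True
    then have "pderiv q = 0" by (simp add: pderiv_eq_0_iff)
    then show ?thesis by (simp add: L_Hp_step)
  next
    case False
    then have "degree (pderiv q) < k" using Suc.prems by (simp add: degree_pderiv)
    then show ?thesis by (simp add: L_Hp_step Suc.IH)
  qed
qed

definition NN :: "nat \<Rightarrow> real" where "NN k = 2 ^ k * fact k * sqrt pi"

lemma NN_pos: "NN k > 0" by (simp add: NN_def)

lemma NN_Suc: "NN (Suc k) = 2 * real (Suc k) * NN k"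
  by (simp add: NN_def algebra_simps)

lemma L_Hp_norm: "L (Hp k * Hp k) = NN k"
proof (induction k)
  case 0 then show ?case by (simp add: L_def mom_def NN_def)
next
  case (Suc k)
  have "L (Hp (Suc k) * Hp (Suc k)) = L (Hp k * pderiv (Hp (Suc k)))" by (rule L_Hp_step)
  also have "\<dots> = 2 * real (Suc k) * L (Hp k * Hp k)"
    by (simp add: pderiv_Hp L_smult)
  finally show ?case using Suc NN_Suc by simp
qed

lemma L_Hp_gram: "L (Hp a * Hp b) = (if a = b then NN a else 0)"
proof -
  consider "a = b" | "a < b" | "b < a" by linarith
  then show ?thesis
  proof cases
    case 1 then show ?thesis by (simp add: L_Hp_norm)
  next
    case 2
    then have "L (Hp b * Hp a) = 0" using degree_Hp[of a] by (intro L_Hp_ortho) simp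
    then show ?thesis using 2 by (simp add: mult.commute)
  next
    case 3
    then show ?thesis using degree_Hp[of b] by (auto intro: L_Hp_ortho)
  qed
qed

lemma X_Hp: "[:0,1:] * Hp k = smult (1/2) (Hp (Suc k)) + smult (real k) (Hp (k - 1))"
proof (cases k)
  case 0 then show ?thesis by simp
next
  case (Suc j)
  then show ?thesis by (intro poly_eqI) (simp add: coeff_pCons algebra_simps split: nat.split)
qed



definition LG :: "nat \<Rightarrow> nat \<Rightarrow> real" where "LG a b = (if a = b then NN a else 0)"

definition Q :: "nat \<Rightarrow> nat \<Rightarrow> real" where "Q k l = L ([:0,0,1:] * Hp k * Hp l)"

lemma Q_formula: "Q k l = 1/4 * LG (Suc k) (Suc l) + real l / 2 * LG (Suc k) (l - 1)
   + real k / 2 * LG (k - 1) (Suc l) + real k * real l * LG (k - 1) (l - 1)"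
proof -
  define A where "A = Hp (Suc k)" define B where "B = Hp (k - 1)"
  define C where "C = Hp (Suc l)" define D where "D = Hp (l - 1)"
  have "[:0,0,1:] * Hp k * Hp l = ([:0,1:] * Hp k) * ([:0,1:] * Hp l)"
    by (simp add: algebra_simps)
  also have "\<dots> = (smult (1/2) A + smult (real k) B) * (smult (1/2) C + smult (real l) D)"
    unfolding X_Hp A_def B_def C_def D_def ..
  also have "\<dots> = smult (1/4) (A * C) + smult (real l / 2) (A * D) + smult (real k / 2) (B * C)
     + smult (real k * real l) (B * D)"
    by (simp add: algebra_simps)
  finally have e: "[:0,0,1:] * Hp k * Hp l = \<dots>" .
  show ?thesis unfolding Q_def e
    by (simp only: L_add L_smult A_def B_def C_def D_def L_Hp_gram LG_def)
qed

lemma Q_sym: "Q k l = Q l k"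
  unfolding Q_def by (simp add: algebra_simps)

definition G :: "nat \<Rightarrow> nat \<Rightarrow> real" where "G k l = Q k l / (sqrt (NN k) * sqrt (NN l))"

lemma G_sym: "G k l = G l k"
  unfolding G_def using Q_sym by (simp add: mult.commute)

lemma G_diag: "G k k = real k + 1/2"
proof -
  have "Q k k = NN (Suc k) / 4 + real k * real k * NN (k - 1)"
    by (simp add: Q_formula LG_def)
  also have "\<dots> = (real k + 1/2) * NN k"
  proof (cases k)
    case 0 then show ?thesis by (simp add: NN_Suc)
  next
    case (Suc j) then show ?thesis by (simp add: NN_Suc algebra_simps)
  qed
  finally show ?thesis unfolding G_def using NN_pos[of k]
    by (simp add: real_sqrt_mult[symmetric])
qed

lemma G_off: "G k (Suc (Suc k)) = sqrt ((real k + 1) * (real k + 2) / 4)"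
proof -
  have q: "Q k (Suc (Suc k)) = (real k + 2) / 2 * NN (Suc k)"
    by (simp add: Q_formula LG_def) linarith
  have n2: "NN (Suc (Suc k)) = 2 * (real k + 2) * NN (Suc k)" and n1: "NN (Suc k) = 2 * (real k + 1) * NN k"
    by (simp_all add: NN_Suc)
  have pos: "NN k > 0" by (rule NN_pos)
  have "G k (Suc (Suc k)) \<ge> 0" unfolding G_def q using NN_pos[of "Suc k"] NN_pos[of k] NN_pos[of "Suc (Suc k)"]
    by (intro divide_nonneg_pos mult_nonneg_nonneg mult_pos_pos) auto
  moreover have "(G k (Suc (Suc k)))\<^sup>2 = (real k + 1) * (real k + 2) / 4"
  proof -
    have "(G k (Suc (Suc k)))\<^sup>2 = ((real k + 2) / 2 * NN (Suc k))\<^sup>2 / (NN k * NN (Suc (Suc k)))"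
      unfolding G_def q using pos NN_pos[of "Suc (Suc k)"]
      by (simp add: power_divide power_mult_distrib)
    also have "\<dots> = (real k + 1) * (real k + 2) / 4"
    proof -
      have g: "((t + 2) / 2 * (2 * (t + 1) * n))\<^sup>2 / (n * (2 * (t + 2) * (2 * (t + 1) * n))) = (t + 1) * (t + 2) / 4"
        if "n > 0" "t \<ge> 0" for n t :: real
      proof -
        have "((t + 2) / 2 * (2 * (t + 1) * n))\<^sup>2 / (n * (2 * (t + 2) * (2 * (t + 1) * n)))
          = ((t+1)*(t+2)*n*n) * ((t+1)*(t+2)) / (((t+1)*(t+2)*n*n) * 4)"
        proof -
          have a: "((t + 2) / 2 * (2 * (t + 1) * n))\<^sup>2 = ((t+1)*(t+2)*n*n) * ((t+1)*(t+2))"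
            by (simp add: power2_eq_square field_simps)
          have b: "n * (2 * (t + 2) * (2 * (t + 1) * n)) = ((t+1)*(t+2)*n*n) * 4"
            by (simp add: algebra_simps)
          show ?thesis unfolding a b ..
        qed
        also have "\<dots> = ((t+1)*(t+2)) / 4" using that by (intro mult_divide_mult_cancel_left) auto
        finally show ?thesis .
      qed
      show ?thesis unfolding n2 n1 using pos by (intro g) auto
    qed
    finally show ?thesis .
  qed
  ultimately show ?thesis by (metis real_sqrt_unique)
qed

lemma G_zero: "l \<noteq> k \<Longrightarrow> l \<noteq> Suc (Suc k) \<Longrightarrow> k \<noteq> Suc (Suc l) \<Longrightarrow> G k l = 0"
  unfolding G_def Q_formula LG_def by auto



lemma G_int: "has_bochner_integral lborel
   (\<lambda>x. x\<^sup>2 * (hermite_on k x * hermite_on l x) * exp (- x\<^sup>2)) (G k l)"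
proof -
  have "has_bochner_integral lborel (\<lambda>x. poly ([:0,0,1:] * Hp k * Hp l) x * exp (- x\<^sup>2) / (sqrt (NN k) * sqrt (NN l)))
     (Q k l / (sqrt (NN k) * sqrt (NN l)))"
    unfolding Q_def by (intro has_bochner_integral_divide_zero L_int)
  then show ?thesis unfolding G_def
    by (rule has_bochner_integral_cong[THEN iffD1, rotated 3])
       (auto simp: hermite_on_def poly_Hp NN_def power2_eq_square)
qed

lemma varS_real:
  fixes c :: "nat \<Rightarrow> complex"
  shows "varS (\<lambda>x::real. \<Sum>l\<le>n. c l * complex_of_real (hermite_on l x)) =
    (\<Sum>k\<le>n. \<Sum>l\<le>n. Re (cnj (c k) * c l) * G k l)"
proof -
  let ?P = "\<lambda>x::real. \<Sum>l\<le>n. c l * complex_of_real (hermite_on l x)"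
  have pt: "x\<^sup>2 * (cmod (?P x))\<^sup>2 * exp (- x\<^sup>2) =
     (\<Sum>k\<le>n. \<Sum>l\<le>n. Re (cnj (c k) * c l) * (x\<^sup>2 * (hermite_on k x * hermite_on l x) * exp (- x\<^sup>2)))" for x
  proof -
    have "(cmod (?P x))\<^sup>2 = Re (cnj (?P x) * ?P x)"
      using arg_cong[OF complex_norm_square[of "?P x"], of Re] by (simp add: mult.commute)
    also have "cnj (?P x) * ?P x = (\<Sum>k\<le>n. cnj (c k) * complex_of_real (hermite_on k x)) * ?P x"
      by (simp add: cnj_sum)
    also have "\<dots> = (\<Sum>k\<le>n. \<Sum>l\<le>n. (cnj (c k) * c l) * complex_of_real (hermite_on k x * hermite_on l x))"
      by (simp only: sum_product) (simp add: algebra_simps)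
    also have "Re \<dots> = (\<Sum>k\<le>n. \<Sum>l\<le>n. Re (cnj (c k) * c l) * (hermite_on k x * hermite_on l x))"
      by (simp add: Re_sum)
    finally show ?thesis by (simp add: sum_distrib_left sum_distrib_right algebra_simps)
  qed
  have "has_bochner_integral lborel (\<lambda>x. \<Sum>k\<le>n. \<Sum>l\<le>n. Re (cnj (c k) * c l) * (x\<^sup>2 * (hermite_on k x * hermite_on l x) * exp (- x\<^sup>2)))
      (\<Sum>k\<le>n. \<Sum>l\<le>n. Re (cnj (c k) * c l) * G k l)"
    by (intro has_bochner_integral_sum has_bochner_integral_mult_right G_int)
  then have "has_bochner_integral lborel (\<lambda>x. x\<^sup>2 * (cmod (?P x))\<^sup>2 * exp (- x\<^sup>2))
      (\<Sum>k\<le>n. \<Sum>l\<le>n. Re (cnj (c k) * c l) * G k l)"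
    by (simp only: pt)
  then show ?thesis unfolding varS_def by (rule has_bochner_integral_integral_eq)
qed

lemma varS_complex:
  fixes c :: "nat \<Rightarrow> complex"
  shows "complex_of_real (varS (\<lambda>x::real. \<Sum>l\<le>n. c l * complex_of_real (hermite_on l x))) =
    (\<Sum>k\<le>n. \<Sum>l\<le>n. cnj (c k) * c l * complex_of_real (G k l))"
proof -
  define S where "S = (\<Sum>k\<le>n. \<Sum>l\<le>n. cnj (c k) * c l * complex_of_real (G k l))"
  have "cnj S = (\<Sum>k\<le>n. \<Sum>l\<le>n. c k * cnj (c l) * complex_of_real (G k l))"
    unfolding S_def by (simp add: cnj_sum)
  also have "\<dots> = (\<Sum>l\<le>n. \<Sum>k\<le>n. c k * cnj (c l) * complex_of_real (G l k))"
    by (subst sum.swap) (simp add: G_sym)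
  also have "\<dots> = S" unfolding S_def by (simp add: mult.commute)
  finally have "cnj S = S" .
  then have "Im S = 0" by (metis add.inverse_neutral cnj.simps(2) eq_iff_diff_eq_0 diff_0 diff_minus_eq_add minus_diff_eq neg_equal_zero)
  then have "S = complex_of_real (Re S)" by (simp add: complex_eq_iff)
  moreover have "Re S = (\<Sum>k\<le>n. \<Sum>l\<le>n. Re (cnj (c k) * c l) * G k l)"
    unfolding S_def by (simp add: Re_sum)
  ultimately show ?thesis unfolding varS_real S_def by simp
qed



lemma split_eo: "(\<Sum>k\<le>2 * q. f k) = (\<Sum>i<Suc q. f (2 * i)) + (\<Sum>i<q. f (2 * i + 1))"
  for f :: "nat \<Rightarrow> 'a::comm_monoid_add"
proof (induction q)
  case 0 then show ?case by simp
next
  case (Suc q)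
  have "{..2 * Suc q} = insert (2 * q + 2) (insert (2 * q + 1) {..2 * q})" by auto
  then have "(\<Sum>k\<le>2 * Suc q. f k) = f (2 * q + 2) + (f (2 * q + 1) + (\<Sum>k\<le>2 * q. f k))"
    by simp
  then show ?case using Suc by (simp add: algebra_simps)
qed

lemma int_set1: "{0..int q} = int ` {..<Suc q}"
  using image_int_atLeastLessThan[of 0 "Suc q"] by (auto simp: lessThan_atLeast0)

lemma int_set2: "{0..int q - 1} = int ` {..<q}"
  using image_int_atLeastLessThan[of 0 q] by (auto simp: lessThan_atLeast0)

lemma jf_reindex: "jacobi_form \<alpha> 0 N v = (\<Sum>i\<in>A. \<Sum>j\<in>A. cnj (v (int i)) * complex_of_real (jacobi_entry \<alpha> (int i) (int j)) * v (int j))"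
  if "{0..N} = int ` A" for A N
  unfolding jacobi_form_def that by (simp add: sum.reindex)

lemma je_even: "jacobi_entry (-1/2) (int i) (int j) = G (2 * i) (2 * j)"
proof -
  consider "i = j" | "j = Suc i" | "i = Suc j" | "i \<noteq> j" "j \<noteq> Suc i" "i \<noteq> Suc j" by blast
  then show ?thesis
  proof cases
    case 1 then show ?thesis by (simp add: jacobi_entry_def lag_a_def G_diag)
  next
    case 2
    have "G (2 * i) (Suc (Suc (2 * i))) = sqrt ((real (2*i) + 1) * (real (2*i) + 2) / 4)" by (rule G_off)
    moreover have "(real (2*i) + 1) * (real (2*i) + 2) / 4 = (real i + 1) * (real i + 1 + -1/2)"
      by (simp add: field_simps)
    ultimately show ?thesis using 2 by (simp add: jacobi_entry_def lag_b_def)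
  next
    case 3
    have "G (2 * j) (Suc (Suc (2 * j))) = sqrt ((real (2*j) + 1) * (real (2*j) + 2) / 4)" by (rule G_off)
    moreover have "(real (2*j) + 1) * (real (2*j) + 2) / 4 = (real j + 1) * (real j + 1 + -1/2)"
      by (simp add: field_simps)
    ultimately show ?thesis using 3 G_sym[of "2 * Suc j" "2 * j"] by (simp add: jacobi_entry_def lag_b_def)
  next
    case 4
    have "G (2 * i) (2 * j) = 0" using 4 by (intro G_zero) auto
    then show ?thesis using 4 by (simp add: jacobi_entry_def)
  qed
qed

lemma je_odd: "jacobi_entry (1/2) (int i) (int j) = G (2 * i + 1) (2 * j + 1)"
proof -
  consider "i = j" | "j = Suc i" | "i = Suc j" | "i \<noteq> j" "j \<noteq> Suc i" "i \<noteq> Suc j" by blast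
  then show ?thesis
  proof cases
    case 1 then show ?thesis by (simp add: jacobi_entry_def lag_a_def G_diag)
  next
    case 2
    have "G (2 * i + 1) (Suc (Suc (2 * i + 1))) = sqrt ((real (2*i+1) + 1) * (real (2*i+1) + 2) / 4)" by (rule G_off)
    moreover have "(real (2*i+1) + 1) * (real (2*i+1) + 2) / 4 = (real i + 1) * (real i + 1 + 1/2)"
      by (simp add: field_simps)
    ultimately show ?thesis using 2 by (simp add: jacobi_entry_def lag_b_def)
  next
    case 3
    have "G (2 * j + 1) (Suc (Suc (2 * j + 1))) = sqrt ((real (2*j+1) + 1) * (real (2*j+1) + 2) / 4)" by (rule G_off)
    moreover have "(real (2*j+1) + 1) * (real (2*j+1) + 2) / 4 = (real j + 1) * (real j + 1 + 1/2)"
      by (simp add: field_simps)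
    ultimately show ?thesis using 3 G_sym[of "2 * Suc j + 1" "2 * j + 1"] by (simp add: jacobi_entry_def lag_b_def)
  next
    case 4
    have "G (2 * i + 1) (2 * j + 1) = 0" using 4 by (intro G_zero) auto
    then show ?thesis using 4 by (simp add: jacobi_entry_def)
  qed
qed

lemma G_cross: "G (2 * i) (2 * j + 1) = 0" "G (2 * i + 1) (2 * j) = 0"
  by (intro G_zero; presburger)+

lemma main_i:
  fixes c :: "nat \<Rightarrow> complex" and q :: nat
  shows "(\<Sum>k\<le>2*q. \<Sum>l\<le>2*q. cnj (c k) * c l * complex_of_real (G k l)) =
    jacobi_form (-1/2) 0 (int q) (\<lambda>l. c (nat (2 * l)))
  + jacobi_form (1/2) 0 (int q - 1) (\<lambda>l. c (nat (2 * l + 1)))"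
proof -
  have nat1: "nat (2 * int i) = 2 * i" "nat (2 * int i + 1) = 2 * i + 1" for i by auto
  show ?thesis
    unfolding jf_reindex[OF int_set1] jf_reindex[OF int_set2]
    apply (simp only: nat1 je_even je_odd split_eo sum.distrib G_cross)
    apply (simp add: algebra_simps)
    done
qed

lemma jf_shift:
  assumes "0 \<le> M" and "\<And>i. 0 \<le> i \<Longrightarrow> i < M \<Longrightarrow> v i = 0"
  shows "jacobi_form \<alpha> M N v = jacobi_form \<alpha> 0 N v"
proof -
  have "jacobi_form \<alpha> 0 N v = (\<Sum>i\<in>{M..N}. \<Sum>j\<in>{0..N}. cnj (v i) * complex_of_real (jacobi_entry \<alpha> i j) * v j)"
    unfolding jacobi_form_def
    by (rule sum.mono_neutral_right) (use assms in auto)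
  also have "\<dots> = jacobi_form \<alpha> M N v"
    unfolding jacobi_form_def
  proof (rule sum.cong[OF refl])
    fix i assume "i \<in> {M..N}"
    show "(\<Sum>j\<in>{0..N}. cnj (v i) * complex_of_real (jacobi_entry \<alpha> i j) * v j) =
          (\<Sum>j\<in>{M..N}. cnj (v i) * complex_of_real (jacobi_entry \<alpha> i j) * v j)"
      by (rule sum.mono_neutral_right) (use assms in auto)
  qed
  finally show ?thesis ..
qed



theorem lemma5p1:
  fixes n m :: nat and c :: "nat \<Rightarrow> complex"
  assumes "even n" and "even m" and "m \<le> n"
  defines "P \<equiv> (\<lambda>x::real. \<Sum>l\<le>n. c l * complex_of_real (hermite_on l x))"
  shows "complex_of_real (varS P) =
           jacobi_form (-1/2) 0 (int n div 2) (\<lambda>l. c (nat (2 * l)))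
         + jacobi_form (1/2) 0 (int n div 2 - 1) (\<lambda>l. c (nat (2 * l + 1)))
         \<and> ((\<forall>l<m. c l = 0) \<longrightarrow>
         complex_of_real (varS P) =
           jacobi_form (-1/2) (int m div 2) (int n div 2) (\<lambda>l. c (nat (2 * l)))
         + jacobi_form (1/2) (int m div 2) (int n div 2 - 1) (\<lambda>l. c (nat (2 * l + 1))))"
proof -
  obtain q where q: "n = 2 * q" using assms(1) by blast
  obtain p where p: "m = 2 * p" using assms(2) by blast
  have nq: "int n div 2 = int q" and mp: "int m div 2 = int p" using q p by auto
  have part1: "complex_of_real (varS P) =
           jacobi_form (-1/2) 0 (int n div 2) (\<lambda>l. c (nat (2 * l)))
         + jacobi_form (1/2) 0 (int n div 2 - 1) (\<lambda>l. c (nat (2 * l + 1)))"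
    unfolding P_def varS_complex q using main_i[of c q] by simp
  moreover have "complex_of_real (varS P) =
           jacobi_form (-1/2) (int m div 2) (int n div 2) (\<lambda>l. c (nat (2 * l)))
         + jacobi_form (1/2) (int m div 2) (int n div 2 - 1) (\<lambda>l. c (nat (2 * l + 1)))"
    if z: "\<forall>l<m. c l = 0"
  proof -
    have e: "jacobi_form (-1/2) (int m div 2) (int n div 2) (\<lambda>l. c (nat (2 * l))) =
             jacobi_form (-1/2) 0 (int n div 2) (\<lambda>l. c (nat (2 * l)))"
      unfolding mp by (rule jf_shift) (use z p in auto)
    have o: "jacobi_form (1/2) (int m div 2) (int n div 2 - 1) (\<lambda>l. c (nat (2 * l + 1))) =
             jacobi_form (1/2) 0 (int n div 2 - 1) (\<lambda>l. c (nat (2 * l + 1)))"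
      unfolding mp
    proof (rule jf_shift)
      fix i :: int assume "0 \<le> i" "i < int p"
      then have "nat (2 * i + 1) < m" using p by linarith
      then show "c (nat (2 * i + 1)) = 0" using z by blast
    qed simp
    show ?thesis using part1 e o by simp
  qed
  ultimately show ?thesis by blast
qed

end
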